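(* In the setting described in the context, let $J=(a_1,\ldots,a_j)$ and $\overline{J}=(\overline{a}_1,\ldots,\overline{a}_j)$, $1\leqslant j\leqslant n-1$, be disjoint non-empty ordered subsets of $\{1,\ldots,|L|\}$ of the same size such that $\ell_{\{a_i\}}\cap\ell_{\{\overline{a}_i\}}\cap m$ is a point for all $i$. Suppose $J'$ and $\overline{J}'$ are disjoint ordered $j$-subsets of $\{1,\ldots,|L|\}$ where, for each $i=1,\ldots,j$, the $i$-th element of $J'$ and the $i$-th element of $\overline{J}'$ is each either the $i$-th element of $J$ or the $i$-th element of $\overline{J}$. Then $z_{J,\overline{J},m}=z_{J',\overline{J}',m}$.
   Context: Let ${\mathbb K}$ be a field, $n\geqslant 2$, and consider $\mathrm{PG}_n({\mathbb K})$. For two non-intersecting subspaces $x,y$, $x\oplus y$ denotes their span. Fix points $x_0,\ldots,x_n$ in general position and put $\Sigma_i=x_0\oplus\cdots\oplus x_i$, $\pi_i=x_1\oplus\cdots\oplus x_i$. For $i=3,\ldots,n$ let $y_i$ be a point on the line $x_{i-1}\oplus x_i$ different from $x_{i-1}$ and $x_i$. Let $L$ be a finite set of lines of the plane $\Sigma_2$ meeting the line $\pi_2$ in pairwise distinct points, all different from $x_2$, labelled $\ell_{\{1\}},\ldots,\ell_{\{|L|\}}$. An ordered subset of $\{1,\ldots,|L|\}$ is a sequence of distinct elements; for $|J|\geqslant2$ write $J=(\ldots,b,a)$ ($a$ last, $b$ second-to-last) and let $J\setminus\{a\}$, $J\setminus\{b\}$ be obtained by deleting $a$, resp. $b$, keeping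 the order. Let $m$ be a line of $\Sigma_2$ through $x_2$, different from $\pi_2$. If $\ell_{\{i\}}$ and $\ell_{\{j\}}$ meet on $m$, put $z_{\{i\},\{j\},m}=\ell_{\{i\}}\cap\ell_{\{j\}}\cap m$. For disjoint ordered subsets $J=(a_1,\ldots,a_j)$, $\overline{J}=(\overline{a}_1,\ldots,\overline{a}_j)$ with $\ell_{\{a_i\}}\cap\ell_{\{\overline{a}_i\}}\cap m$ a point for all $i$, and $j\geqslant 2$, define recursively $z_{J,\overline{J},m}=(x_{|J|+1}\oplus z_{J\setminus\{a\},\overline{J}\setminus\{\overline{a}\},m})\cap(y_{|J|+1}\oplus z_{J\setminus\{b\},\overline{J}\setminus\{\overline{b}\},m})$, where $J=(\ldots,b,a)$ and $\overline{J}=(\ldots,\overline{b},\overline{a})$. *)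

theory Defs
  imports "HOL-Analysis.Analysis"
begin

text \<open>Projective space PG_n(K) is modelled by the vector space K^{n+1} = 'a^'n with
  CARD('n) = n + 1; projective subspaces are linear subspaces (sets of vectors).\<close>

definition psub :: "('a::field ^ 'n) set \<Rightarrow> bool" where
  "psub S \<longleftrightarrow> vec.subspace S"

definition ppoint :: "('a::field ^ 'n) set \<Rightarrow> bool" where
  "ppoint S \<longleftrightarrow> vec.subspace S \<and> vec.dim S = 1"

definition pline :: "('a::field ^ 'n) set \<Rightarrow> bool" where
  "pline S \<longleftrightarrow> vec.subspace S \<and> vec.dim S = 2"

definition pjoin :: "('a::field ^ 'n) set \<Rightarrow> ('a ^ 'n) set \<Rightarrow> ('a ^ 'n) set" where
  "pjoin S T = vec.span (S \<union> T)"

definition gen_pos :: "nat \<Rightarrow> (nat \<Rightarrow> ('a::field ^ 'n) set) \<Rightarrow> bool" where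
  "gen_pos n x \<longleftrightarrow> (\<forall>i\<le>n. ppoint (x i)) \<and>
     (\<forall>I \<subseteq> {0..n}. vec.dim (vec.span (\<Union>i\<in>I. x i)) = card I)"

definition Sigma_sp :: "(nat \<Rightarrow> ('a::field ^ 'n) set) \<Rightarrow> nat \<Rightarrow> ('a ^ 'n) set" where
  "Sigma_sp x i = vec.span (\<Union>k\<in>{0..i}. x k)"

definition pi_sp :: "(nat \<Rightarrow> ('a::field ^ 'n) set) \<Rightarrow> nat \<Rightarrow> ('a ^ 'n) set" where
  "pi_sp x i = vec.span (\<Union>k\<in>{1..i}. x k)"

definition del2 :: "'b list \<Rightarrow> 'b list" where
  "del2 J = butlast (butlast J) @ [last J]"

text \<open>z_{J,Jbar,m}; ordered subsets are lists, l k is the line labelled k.\<close>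
function zpt :: "(nat \<Rightarrow> ('a::field ^ 'n) set) \<Rightarrow> (nat \<Rightarrow> ('a ^ 'n) set) \<Rightarrow>
    (nat \<Rightarrow> ('a ^ 'n) set) \<Rightarrow> ('a ^ 'n) set \<Rightarrow> nat list \<Rightarrow> nat list \<Rightarrow> ('a ^ 'n) set" where
  "zpt x y l m J K =
    (if length J < 2 then l (hd J) \<inter> l (hd K) \<inter> m
     else pjoin (x (length J + 1)) (zpt x y l m (butlast J) (butlast K))
          \<inter> pjoin (y (length J + 1)) (zpt x y l m (del2 J) (del2 K)))"
  by pat_completeness auto
termination
  by (relation "Wellfounded.measure (\<lambda>(x, y, l, m, J, K). length J)") (auto simp: del2_def)

end

theory Submission
  imports Defs
begin

lemma del2_len: "length J \<ge> 2 \<Longrightarrow> length (del2 J) = length J - 1"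
  by (simp add: del2_def)

lemma del2_nth: "length J \<ge> 2 \<Longrightarrow> i < length J - 1 \<Longrightarrow>
   del2 J ! i = (if i < length J - 2 then J ! i else J ! (length J - 1))"
  using last_conv_nth[of J] by (cases "J = []") (auto simp: del2_def nth_append nth_butlast)

lemma zpt_pairs:
  "length J = k \<Longrightarrow> length K = k \<Longrightarrow> length J' = k \<Longrightarrow> length K' = k \<Longrightarrow> k \<ge> 1 \<Longrightarrow>
   (\<forall>i<k. {J!i, K!i} = {J'!i, K'!i}) \<Longrightarrow> zpt x y l m J K = zpt x y l m J' K'"
proof (induction k arbitrary: J K J' K' rule: less_induct)
  case (less k)
  show ?case
  proof (cases "k < 2")
    case True
    then have k1: "k = 1" using less by auto
    have "{J!0, K!0} = {J'!0, K'!0}" using less k1 by auto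
    then have "l (J!0) \<inter> l (K!0) = l (J'!0) \<inter> l (K'!0)"
      by (auto simp: doubleton_eq_iff)
    moreover have "hd J = J!0" "hd K = K!0" "hd J' = J'!0" "hd K' = K'!0"
      using less k1 by (auto intro!: hd_conv_nth)
    ultimately show ?thesis using k1 less by (simp add: zpt.simps[of _ _ _ _ J] zpt.simps[of _ _ _ _ J'])
  next
    case False
    have IH1: "zpt x y l m (butlast J) (butlast K) = zpt x y l m (butlast J') (butlast K')"
      apply (rule less.IH[of "k - 1"])
      using less False by (auto simp: nth_butlast)
    have IH2: "zpt x y l m (del2 J) (del2 K) = zpt x y l m (del2 J') (del2 K')"
      apply (rule less.IH[of "k - 1"])
      using less False by (auto simp: del2_len del2_nth)
    show ?thesis using False less IH1 IH2
      by (simp add: zpt.simps[of _ _ _ _ J] zpt.simps[of _ _ _ _ J'])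
  qed
qed


theorem lemma2p5:
  fixes n N j :: nat
    and x y l :: "nat \<Rightarrow> ('a::field ^ 'n) set"
    and m :: "('a ^ 'n) set"
    and J Jb J' Jb' :: "nat list"
  assumes dimn: "CARD('n) = n + 1" and n2: "n \<ge> 2"
    and gp: "gen_pos n x"
    and y_pt: "\<And>i. 3 \<le> i \<Longrightarrow> i \<le> n \<Longrightarrow>
        ppoint (y i) \<and> y i \<subseteq> pjoin (x (i - 1)) (x i) \<and> y i \<noteq> x (i - 1) \<and> y i \<noteq> x i"
    and L_lines: "\<And>k. k \<in> {1..N} \<Longrightarrow> pline (l k) \<and> l k \<subseteq> Sigma_sp x 2
        \<and> ppoint (l k \<inter> pi_sp x 2) \<and> l k \<inter> pi_sp x 2 \<noteq> x 2"
    and L_dist: "\<And>k k'. k \<in> {1..N} \<Longrightarrow> k' \<in> {1..N} \<Longrightarrow> k \<noteq> k' \<Longrightarrow>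
        l k \<inter> pi_sp x 2 \<noteq> l k' \<inter> pi_sp x 2"
    and m_line: "pline m" "m \<subseteq> Sigma_sp x 2" "x 2 \<subseteq> m" "m \<noteq> pi_sp x 2"
    and j: "1 \<le> j" "j \<le> n - 1"
    and J: "length J = j" "distinct J" "set J \<subseteq> {1..N}"
    and Jb: "length Jb = j" "distinct Jb" "set Jb \<subseteq> {1..N}"
    and JJb: "set J \<inter> set Jb = {}"
    and meet: "\<And>i. i < j \<Longrightarrow> ppoint (l (J ! i) \<inter> l (Jb ! i) \<inter> m)"
    and J': "length J' = j" "distinct J'" "set J' \<subseteq> {1..N}"
    and Jb': "length Jb' = j" "distinct Jb'" "set Jb' \<subseteq> {1..N}"
    and J'Jb': "set J' \<inter> set Jb' = {}"
    and choice: "\<And>i. i < j \<Longrightarrow> (J' ! i = J ! i \<or> J' ! i = Jb ! i)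
                                \<and> (Jb' ! i = J ! i \<or> Jb' ! i = Jb ! i)"
  shows "zpt x y l m J Jb = zpt x y l m J' Jb'"
proof -
  have "\<forall>i<j. {J!i, Jb!i} = {J'!i, Jb'!i}"
  proof (intro allI impI)
    fix i assume i: "i < j"
    have "J'!i \<noteq> Jb'!i" using J'Jb' J' Jb' i by (metis disjoint_iff nth_mem)
    moreover have "J!i \<noteq> Jb!i" using JJb J Jb i by (metis disjoint_iff nth_mem)
    ultimately show "{J!i, Jb!i} = {J'!i, Jb'!i}" using choice[OF i] by auto
  qed
  then show ?thesis by (rule zpt_pairs[OF J(1) Jb(1) J'(1) Jb'(1) j(1)])
qed

end
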